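(* Let $G$ be a simple graph on $X=\{x_1,\ldots,x_n\}$ and let $G'$ be the graph obtained from $G$ by duplicating every vertex of $G$ exactly $k-1$ times. Then $G$ is shellable if and only if $G'$ is $k$-shellable.
   Context: Duplicating each vertex $k-1$ times gives the graph $G'$ with vertex set $\{x_{ij}:1\le i\le n,1\le j\le k\}$ and edge set $\{x_{ir}x_{js}: x_ix_j\in E(G),\ 1\le r,s\le k\}$. The independence complex $\Delta_G$ of a graph $G$ has as faces the sets of pairwise non-adjacent vertices. A graph is shellable (resp. $k$-shellable) if $\Delta_G$ is. $\langle F_1,\ldots,F_s\rangle$ denotes the simplicial complex with facets $F_1,\dots,F_s$. A complex is shellable if its facets can be ordered $F_1,\ldots,F_r$ with $\langle F_j\rangle\cap\langle F_1,\ldots,F_{j-1}\rangle$ pure of dimension $\dim F_j-1$ for all $j\ge2$. A complex $\Gamma$ of dimension $d$ is $k$-shellable ($1\le k\le d+1$) if its facets can be ordered $F_1,\ldots,F_r$ such that for every $j=2,\ldots,r$, $\Gamma_j=\langle F_j\rangle\cap\langle F_1,\ldots,F_{j-1}\rangle$ satisfies (i) $\Gamma_j$ is generated by a nonempty set of faces of $\langle F_j\rangle$ of dimension $|F_j|-k-1$; (ii) if $\Gamma_j$ has more than one facet, then for every two distinct facets $\sigma,\tau$ of $\Gamma_j$, $F_j\subseteq\sigma\cup\tau$. *)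

theory Defs
  imports Main
begin

definition simple_graph :: "'a set \<Rightarrow> 'a set set \<Rightarrow> bool" where
  "simple_graph V E \<longleftrightarrow> finite V \<and>
     (\<forall>e\<in>E. \<exists>u v. e = {u, v} \<and> u \<noteq> v \<and> u \<in> V \<and> v \<in> V)"

text \<open>Duplicating each vertex k-1 times: vertex x_i becomes x_{i1},...,x_{ik}.\<close>
definition dup_vertices :: "'a set \<Rightarrow> nat \<Rightarrow> ('a \<times> nat) set" where
  "dup_vertices V k = V \<times> {1..k}"

definition dup_edges :: "'a set set \<Rightarrow> nat \<Rightarrow> ('a \<times> nat) set set" where
  "dup_edges E k = {{(u, r), (v, s)} | u v r s. {u, v} \<in> E \<and> r \<in> {1..k} \<and> s \<in> {1..k}}"

definition indep_complex :: "'a set \<Rightarrow> 'a set set \<Rightarrow> 'a set set" where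
  "indep_complex V E = {S. S \<subseteq> V \<and> (\<forall>u\<in>S. \<forall>v\<in>S. {u, v} \<notin> E)}"

definition facets :: "'a set set \<Rightarrow> 'a set set" where
  "facets \<Delta> = {F \<in> \<Delta>. \<forall>H\<in>\<Delta>. F \<subseteq> H \<longrightarrow> H = F}"

text \<open>\<Gamma>_j = <F_j> \<inter> <F_1,...,F_{j-1}> for a facet ordering Fs (0-indexed).\<close>
definition shell_inter :: "'a set list \<Rightarrow> nat \<Rightarrow> 'a set set" where
  "shell_inter Fs j = {\<sigma>. \<sigma> \<subseteq> Fs ! j \<and> (\<exists>i<j. \<sigma> \<subseteq> Fs ! i)}"

text \<open>Shellable (non-pure sense): \<Gamma>_j pure of dimension dim F_j - 1.\<close>
definition shellable :: "'a set set \<Rightarrow> bool" where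
  "shellable \<Delta> \<longleftrightarrow> (\<exists>Fs. distinct Fs \<and> set Fs = facets \<Delta> \<and>
     (\<forall>j. 0 < j \<and> j < length Fs \<longrightarrow>
        (\<forall>\<sigma>\<in>facets (shell_inter Fs j). card \<sigma> + 1 = card (Fs ! j))))"

text \<open>k-shellable, for a complex of dimension d with 1 \<le> k \<le> d+1
  (d+1 = maximal cardinality of a face).  A face of dimension |F_j|-k-1 has
  cardinality |F_j|-k.\<close>
definition k_shellable :: "nat \<Rightarrow> 'a set set \<Rightarrow> bool" where
  "k_shellable k \<Delta> \<longleftrightarrow> 1 \<le> k \<and> k \<le> Max (card ` \<Delta>) \<and>
    (\<exists>Fs. distinct Fs \<and> set Fs = facets \<Delta> \<and>
     (\<forall>j. 0 < j \<and> j < length Fs \<longrightarrow>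
        facets (shell_inter Fs j) \<noteq> {} \<and>
        (\<forall>\<sigma>\<in>facets (shell_inter Fs j). card \<sigma> + k = card (Fs ! j)) \<and>
        (card (facets (shell_inter Fs j)) > 1 \<longrightarrow>
           (\<forall>\<sigma>\<in>facets (shell_inter Fs j). \<forall>\<tau>\<in>facets (shell_inter Fs j).
               \<sigma> \<noteq> \<tau> \<longrightarrow> Fs ! j \<subseteq> \<sigma> \<union> \<tau>))))"

end

theory Submission
  imports Defs
begin

definition dupk :: "nat \<Rightarrow> 'a set \<Rightarrow> ('a \<times> nat) set" where
  "dupk k A = A \<times> {1..k}"

lemma fst_dupk: "1 \<le> k \<Longrightarrow> fst ` dupk k A = A"
  unfolding dupk_def by force

lemma dupk_sub_iff: "1 \<le> k \<Longrightarrow> dupk k A \<subseteq> dupk k B \<longleftrightarrow> A \<subseteq> B"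
proof
  assume "1 \<le> k" "dupk k A \<subseteq> dupk k B"
  thus "A \<subseteq> B" by (metis fst_dupk image_mono)
next
  assume "A \<subseteq> B" thus "dupk k A \<subseteq> dupk k B" unfolding dupk_def by auto
qed

lemma dupk_inj: "1 \<le> k \<Longrightarrow> dupk k A = dupk k B \<longleftrightarrow> A = B"
  by (metis fst_dupk)

lemma card_dupk: "card (dupk k A) = card A * k"
  unfolding dupk_def by (simp add: card_cartesian_product)

lemma facets_transfer:
  assumes G': "\<And>\<sigma>. \<sigma> \<in> \<Gamma>' \<Longrightarrow> \<sigma> \<subseteq> D (P \<sigma>) \<and> D (P \<sigma>) \<in> \<Gamma>' \<and> P \<sigma> \<in> \<Gamma>"
    and G: "\<And>A. A \<in> \<Gamma> \<Longrightarrow> D A \<in> \<Gamma>'"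
    and sub: "\<And>A B. D A \<subseteq> D B \<longleftrightarrow> A \<subseteq> B"
    and PD: "\<And>A. P (D A) = A"
    and Pm: "\<And>\<sigma> \<tau>. \<sigma> \<subseteq> \<tau> \<Longrightarrow> P \<sigma> \<subseteq> P \<tau>"
  shows "facets \<Gamma>' = D ` facets \<Gamma>"
proof (rule equalityI)
  show "facets \<Gamma>' \<subseteq> D ` facets \<Gamma>"
  proof
    fix S assume S: "S \<in> facets \<Gamma>'"
    hence S1: "S \<in> \<Gamma>'" and S2: "\<And>H. H \<in> \<Gamma>' \<Longrightarrow> S \<subseteq> H \<Longrightarrow> H = S"
      unfolding facets_def by auto
    have e: "S = D (P S)" using G'[OF S1] S2 by metis
    have a1: "P S \<in> \<Gamma>" using G'[OF S1] by blast
    have a2: "\<forall>H\<in>\<Gamma>. P S \<subseteq> H \<longrightarrow> H = P S"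
    proof (intro ballI impI)
      fix H assume H: "H \<in> \<Gamma>" "P S \<subseteq> H"
      have "D (P S) \<subseteq> D H" using H sub by blast
      hence "D H = S" using S2[OF G[OF H(1)]] e by simp
      thus "H = P S" using PD by metis
    qed
    have "P S \<in> facets \<Gamma>" using a1 a2 unfolding facets_def by blast
    thus "S \<in> D ` facets \<Gamma>" using e by blast
  qed
next
  show "D ` facets \<Gamma> \<subseteq> facets \<Gamma>'"
  proof
    fix S assume "S \<in> D ` facets \<Gamma>"
    then obtain F where F: "F \<in> facets \<Gamma>" "S = D F" by blast
    hence F1: "F \<in> \<Gamma>" and F2: "\<And>H. H \<in> \<Gamma> \<Longrightarrow> F \<subseteq> H \<Longrightarrow> H = F"
      unfolding facets_def by auto
    have b1: "S \<in> \<Gamma>'" using G[OF F1] F by simp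
    have b2: "\<forall>H\<in>\<Gamma>'. S \<subseteq> H \<longrightarrow> H = S"
    proof (intro ballI impI)
      fix H assume H: "H \<in> \<Gamma>'" "S \<subseteq> H"
      have "F \<subseteq> P H" using Pm[OF H(2)] F PD by metis
      hence "P H = F" using F2 G'[OF H(1)] by blast
      thus "H = S" using G'[OF H(1)] H(2) F sub by blast
    qed
    show "S \<in> facets \<Gamma>'" using b1 b2 unfolding facets_def by blast
  qed
qed

lemma dup_edge_iff:
  assumes "a \<in> V \<times> {1..k}" "b \<in> V \<times> {1..k}"
  shows "{a, b} \<in> dup_edges E k \<longleftrightarrow> {fst a, fst b} \<in> E"
proof
  assume "{a, b} \<in> dup_edges E k"
  then obtain u v r s where "{a,b} = {(u,r),(v,s)}" "{u,v} \<in> E"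
    unfolding dup_edges_def by blast
  thus "{fst a, fst b} \<in> E" by (auto simp: doubleton_eq_iff insert_commute)
next
  assume "{fst a, fst b} \<in> E"
  thus "{a, b} \<in> dup_edges E k" using assms unfolding dup_edges_def
    by (cases a, cases b) auto
qed

lemma indep_dup_iff:
  "S \<in> indep_complex (dup_vertices V k) (dup_edges E k) \<longleftrightarrow>
     S \<subseteq> V \<times> {1..k} \<and> fst ` S \<in> indep_complex V E"
proof
  assume S: "S \<in> indep_complex (dup_vertices V k) (dup_edges E k)"
  hence s: "S \<subseteq> V \<times> {1..k}" unfolding indep_complex_def dup_vertices_def by auto
  have ne: "\<forall>a\<in>S. \<forall>b\<in>S. {a, b} \<notin> dup_edges E k" using S unfolding indep_complex_def by auto
  have "\<forall>a\<in>S. \<forall>b\<in>S. {fst a, fst b} \<notin> E"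
  proof (intro ballI)
    fix a b assume ab: "a \<in> S" "b \<in> S"
    have "{a, b} \<notin> dup_edges E k" using ne ab by auto
    thus "{fst a, fst b} \<notin> E" using dup_edge_iff[of a V k b E] ab s by auto
  qed
  hence "\<forall>u\<in>fst ` S. \<forall>v\<in>fst ` S. {u, v} \<notin> E" by auto
  moreover have "fst ` S \<subseteq> V" using s by auto
  ultimately show "S \<subseteq> V \<times> {1..k} \<and> fst ` S \<in> indep_complex V E"
    using s unfolding indep_complex_def by auto
next
  assume S: "S \<subseteq> V \<times> {1..k} \<and> fst ` S \<in> indep_complex V E"
  hence ne: "\<forall>a\<in>S. \<forall>b\<in>S. {fst a, fst b} \<notin> E" unfolding indep_complex_def by auto
  have "\<forall>a\<in>S. \<forall>b\<in>S. {a, b} \<notin> dup_edges E k"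
  proof (intro ballI)
    fix a b assume ab: "a \<in> S" "b \<in> S"
    have "{fst a, fst b} \<notin> E" using ne ab by auto
    thus "{a, b} \<notin> dup_edges E k" using dup_edge_iff[of a V k b E] ab S by auto
  qed
  thus "S \<in> indep_complex (dup_vertices V k) (dup_edges E k)"
    using S unfolding indep_complex_def dup_vertices_def by auto
qed

lemma facets_dup:
  assumes "1 \<le> k"
  shows "facets (indep_complex (dup_vertices V k) (dup_edges E k)) = dupk k ` facets (indep_complex V E)"
proof (rule facets_transfer[where P = "\<lambda>S. fst ` S"])
  fix \<sigma> assume s: "\<sigma> \<in> indep_complex (dup_vertices V k) (dup_edges E k)"
  hence a: "\<sigma> \<subseteq> V \<times> {1..k}" "fst ` \<sigma> \<in> indep_complex V E" using indep_dup_iff by blast+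
  have "fst ` \<sigma> \<subseteq> V" using a(1) by auto
  hence "dupk k (fst ` \<sigma>) \<subseteq> V \<times> {1..k}" unfolding dupk_def by auto
  moreover have "\<sigma> \<subseteq> dupk k (fst ` \<sigma>)" using a(1) unfolding dupk_def by force
  ultimately show "\<sigma> \<subseteq> dupk k (fst ` \<sigma>) \<and> dupk k (fst ` \<sigma>) \<in> indep_complex (dup_vertices V k) (dup_edges E k) \<and> fst ` \<sigma> \<in> indep_complex V E"
    using a indep_dup_iff fst_dupk[OF assms] by metis
next
  fix A assume A: "A \<in> indep_complex V E"
  hence "A \<subseteq> V" unfolding indep_complex_def by auto
  hence "dupk k A \<subseteq> V \<times> {1..k}" unfolding dupk_def by auto
  thus "dupk k A \<in> indep_complex (dup_vertices V k) (dup_edges E k)"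
    using A indep_dup_iff fst_dupk[OF assms] by metis
qed (auto simp: dupk_sub_iff[OF assms] fst_dupk[OF assms])

lemma shell_inter_dup:
  assumes "1 \<le> k" "j < length Fs"
  shows "facets (shell_inter (map (dupk k) Fs) j) = dupk k ` facets (shell_inter Fs j)"
proof (rule facets_transfer[where P = "\<lambda>S. fst ` S"])
  fix \<sigma> assume s: "\<sigma> \<in> shell_inter (map (dupk k) Fs) j"
  then obtain i where i: "i < j" "\<sigma> \<subseteq> dupk k (Fs ! i)" "\<sigma> \<subseteq> dupk k (Fs ! j)"
    unfolding shell_inter_def using assms(2) by auto
  have a: "fst ` \<sigma> \<subseteq> Fs ! i" "fst ` \<sigma> \<subseteq> Fs ! j" using i unfolding dupk_def by auto
  have b: "\<sigma> \<subseteq> dupk k (fst ` \<sigma>)" using i(3) unfolding dupk_def by force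
  have c: "dupk k (fst ` \<sigma>) \<subseteq> map (dupk k) Fs ! i" "dupk k (fst ` \<sigma>) \<subseteq> map (dupk k) Fs ! j"
    using a i(1) assms by (auto simp: dupk_sub_iff)
  show "\<sigma> \<subseteq> dupk k (fst ` \<sigma>) \<and> dupk k (fst ` \<sigma>) \<in> shell_inter (map (dupk k) Fs) j \<and> fst ` \<sigma> \<in> shell_inter Fs j"
    using a b c i(1) unfolding shell_inter_def by blast
next
  fix A assume "A \<in> shell_inter Fs j"
  then obtain i where i: "i < j" "A \<subseteq> Fs ! i" "A \<subseteq> Fs ! j" unfolding shell_inter_def by blast
  have c: "dupk k A \<subseteq> map (dupk k) Fs ! i" "dupk k A \<subseteq> map (dupk k) Fs ! j"
    using i assms by (auto simp: dupk_sub_iff)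
  thus "dupk k A \<in> shell_inter (map (dupk k) Fs) j"
    using i(1) unfolding shell_inter_def by blast
qed (auto simp: dupk_sub_iff[OF assms(1)] fst_dupk[OF assms(1)])

lemma facets_nonempty:
  assumes "finite F" "\<Gamma> \<subseteq> Pow F" "\<Gamma> \<noteq> {}"
  shows "facets \<Gamma> \<noteq> {}"
proof -
  have fin: "finite \<Gamma>" using assms(1,2) finite_subset by (metis finite_Pow_iff)
  define m where "m = Max (card ` \<Gamma>)"
  have "m \<in> card ` \<Gamma>" unfolding m_def using fin assms(3) by (intro Max_in) auto
  then obtain A where A1: "A \<in> \<Gamma>" "card A = m" by blast
  have A2: "\<forall>B\<in>\<Gamma>. card B \<le> card A" using A1 fin unfolding m_def by auto
  have a2: "\<forall>H\<in>\<Gamma>. A \<subseteq> H \<longrightarrow> H = A"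
  proof (intro ballI impI)
    fix H assume H: "H \<in> \<Gamma>" "A \<subseteq> H"
    have fH: "finite H" using H assms(1,2) finite_subset by blast
    have "card A \<le> card H" using card_mono[OF fH H(2)] .
    hence "card A = card H" using A2 H(1) by (metis le_antisym)
    thus "H = A" using card_subset_eq[OF fH H(2)] by simp
  qed
  have "A \<in> facets \<Gamma>" using A1 a2 unfolding facets_def by blast
  thus ?thesis by blast
qed

lemma union_cover:
  assumes "finite F" "A \<subseteq> F" "B \<subseteq> F" "card A + 1 = card F" "card B + 1 = card F" "A \<noteq> B"
  shows "F \<subseteq> A \<union> B"
proof
  fix x assume x: "x \<in> F"
  show "x \<in> A \<union> B"
  proof (rule ccontr)
    assume n: "x \<notin> A \<union> B"
    have c: "card (F - {x}) = card F - 1" using x assms(1) by simp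
    have f: "finite (F - {x})" using assms(1) by simp
    have "A \<subseteq> F - {x}" "card A = card (F - {x})" using assms n c by auto
    hence "A = F - {x}" using card_subset_eq[OF f] by blast
    moreover have "B \<subseteq> F - {x}" "card B = card (F - {x})" using assms n c by auto
    hence "B = F - {x}" using card_subset_eq[OF f] by blast
    ultimately show False using assms(6) by simp
  qed
qed

lemma step_equiv:
  assumes k: "1 \<le> k" and j: "0 < j" "j < length Fs" and fin: "finite (Fs ! j)"
  shows "(\<forall>\<sigma>\<in>facets (shell_inter Fs j). card \<sigma> + 1 = card (Fs ! j)) \<longleftrightarrow>
    (facets (shell_inter (map (dupk k) Fs) j) \<noteq> {} \<and>
        (\<forall>\<sigma>\<in>facets (shell_inter (map (dupk k) Fs) j). card \<sigma> + k = card (map (dupk k) Fs ! j)) \<and>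
        (card (facets (shell_inter (map (dupk k) Fs) j)) > 1 \<longrightarrow>
           (\<forall>\<sigma>\<in>facets (shell_inter (map (dupk k) Fs) j). \<forall>\<tau>\<in>facets (shell_inter (map (dupk k) Fs) j).
               \<sigma> \<noteq> \<tau> \<longrightarrow> map (dupk k) Fs ! j \<subseteq> \<sigma> \<union> \<tau>)))"
  (is "?L \<longleftrightarrow> ?R")
proof -
  let ?\<Gamma> = "shell_inter Fs j"
  have eq: "facets (shell_inter (map (dupk k) Fs) j) = dupk k ` facets ?\<Gamma>"
    using shell_inter_dup[OF k j(2)] .
  have nj: "map (dupk k) Fs ! j = dupk k (Fs ! j)" using j by simp
  have ne: "facets ?\<Gamma> \<noteq> {}"
  proof (rule facets_nonempty[OF fin])
    show "?\<Gamma> \<subseteq> Pow (Fs ! j)" unfolding shell_inter_def by auto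
    show "?\<Gamma> \<noteq> {}" using j unfolding shell_inter_def by auto
  qed
  have sub: "\<And>\<sigma>. \<sigma> \<in> facets ?\<Gamma> \<Longrightarrow> \<sigma> \<subseteq> Fs ! j"
    unfolding facets_def shell_inter_def by auto
  have cardk: "\<And>a b. a * k + k = b * k \<longleftrightarrow> a + 1 = b" using k
    by (metis add_mult_distrib mult_1 mult_cancel2 not_one_le_zero)
  show ?thesis
  proof
    assume L: ?L
    have c3: "\<forall>\<sigma>\<in>dupk k ` facets ?\<Gamma>. \<forall>\<tau>\<in>dupk k ` facets ?\<Gamma>. \<sigma> \<noteq> \<tau> \<longrightarrow> dupk k (Fs ! j) \<subseteq> \<sigma> \<union> \<tau>"
    proof (intro ballI impI)
      fix \<sigma> \<tau> assume s: "\<sigma> \<in> dupk k ` facets ?\<Gamma>" "\<tau> \<in> dupk k ` facets ?\<Gamma>" "\<sigma> \<noteq> \<tau>"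
      then obtain A B where AB: "A \<in> facets ?\<Gamma>" "B \<in> facets ?\<Gamma>" "\<sigma> = dupk k A" "\<tau> = dupk k B"
        by blast
      have "A \<noteq> B" using AB s(3) by blast
      hence "Fs ! j \<subseteq> A \<union> B" using union_cover[OF fin sub[OF AB(1)] sub[OF AB(2)]] L AB by blast
      thus "dupk k (Fs ! j) \<subseteq> \<sigma> \<union> \<tau>" using AB unfolding dupk_def by auto
    qed
    show ?R unfolding eq nj using ne L c3 by (auto simp: card_dupk cardk)
  next
    assume R: ?R
    show ?L
    proof
      fix \<sigma> assume "\<sigma> \<in> facets ?\<Gamma>"
      hence "card (dupk k \<sigma>) + k = card (dupk k (Fs ! j))" using R unfolding eq nj by blast
      thus "card \<sigma> + 1 = card (Fs ! j)" by (simp add: card_dupk cardk)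
    qed
  qed
qed

theorem theorem4p2:
  fixes V :: "'a set" and E :: "'a set set" and k :: nat
  assumes "simple_graph V E" and "V \<noteq> {}" and "1 \<le> k"
  shows "shellable (indep_complex V E) \<longleftrightarrow>
         k_shellable k (indep_complex (dup_vertices V k) (dup_edges E k))"
proof -
  have finV: "finite V" using assms(1) unfolding simple_graph_def by blast
  let ?D = "indep_complex V E"
  let ?D' = "indep_complex (dup_vertices V k) (dup_edges E k)"
  have fac: "facets ?D' = dupk k ` facets ?D" using facets_dup[OF assms(3)] .
  have finF: "\<And>F. F \<in> facets ?D \<Longrightarrow> finite F"
    using finV unfolding facets_def indep_complex_def by (auto intro: finite_subset)
  obtain v where v: "v \<in> V" using assms(2) by blast
  have "{v} \<in> ?D"
  proof -
    have "{v, v} \<notin> E" using assms(1) unfolding simple_graph_def by (auto simp: doubleton_eq_iff)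
    thus ?thesis using v unfolding indep_complex_def by auto
  qed
  moreover have "dupk k {v} \<subseteq> V \<times> {1..k}" using v unfolding dupk_def by auto
  ultimately have vin: "dupk k {v} \<in> ?D'" using indep_dup_iff[of "dupk k {v}" V k E] fst_dupk[OF assms(3), of "{v}"]
    by simp
  have finD': "finite ?D'"
  proof (rule finite_subset)
    show "?D' \<subseteq> Pow (V \<times> {1..k})" unfolding indep_complex_def dup_vertices_def by auto
    show "finite (Pow (V \<times> {1..k}))" using finV by simp
  qed
  have maxk: "k \<le> Max (card ` ?D')"
  proof -
    have "card (dupk k {v}) = k" by (simp add: card_dupk)
    moreover have "card (dupk k {v}) \<le> Max (card ` ?D')"
      by (rule Max_ge[OF finite_imageI[OF finD'] imageI[OF vin]])
    ultimately show ?thesis by simp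
  qed
  have injD: "inj_on (dupk k) X" for X
    by (rule inj_onI) (simp add: dupk_inj[OF assms(3)])
  show ?thesis
  proof
    assume sh: "shellable ?D"
    obtain Fs where Fs: "distinct Fs" "set Fs = facets ?D"
      "\<forall>j. 0 < j \<and> j < length Fs \<longrightarrow> (\<forall>\<sigma>\<in>facets (shell_inter Fs j). card \<sigma> + 1 = card (Fs ! j))"
      using sh unfolding shellable_def by blast
    have c1: "distinct (map (dupk k) Fs)" using Fs(1) injD by (simp add: distinct_map)
    have c2: "set (map (dupk k) Fs) = facets ?D'" using Fs(2) fac by simp
    have c3: "\<forall>j. 0 < j \<and> j < length (map (dupk k) Fs) \<longrightarrow>
        facets (shell_inter (map (dupk k) Fs) j) \<noteq> {} \<and>
        (\<forall>\<sigma>\<in>facets (shell_inter (map (dupk k) Fs) j). card \<sigma> + k = card (map (dupk k) Fs ! j)) \<and>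
        (card (facets (shell_inter (map (dupk k) Fs) j)) > 1 \<longrightarrow>
           (\<forall>\<sigma>\<in>facets (shell_inter (map (dupk k) Fs) j). \<forall>\<tau>\<in>facets (shell_inter (map (dupk k) Fs) j).
               \<sigma> \<noteq> \<tau> \<longrightarrow> map (dupk k) Fs ! j \<subseteq> \<sigma> \<union> \<tau>))"
    proof (intro allI impI)
      fix j assume j: "0 < j \<and> j < length (map (dupk k) Fs)"
      have fj: "finite (Fs ! j)" using j Fs(2) finF nth_mem by auto
      have jj: "0 < j" "j < length Fs" using j by auto
      note iff = step_equiv[OF assms(3) jj fj]
      show "facets (shell_inter (map (dupk k) Fs) j) \<noteq> {} \<and>
        (\<forall>\<sigma>\<in>facets (shell_inter (map (dupk k) Fs) j). card \<sigma> + k = card (map (dupk k) Fs ! j)) \<and>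
        (card (facets (shell_inter (map (dupk k) Fs) j)) > 1 \<longrightarrow>
           (\<forall>\<sigma>\<in>facets (shell_inter (map (dupk k) Fs) j). \<forall>\<tau>\<in>facets (shell_inter (map (dupk k) Fs) j).
               \<sigma> \<noteq> \<tau> \<longrightarrow> map (dupk k) Fs ! j \<subseteq> \<sigma> \<union> \<tau>))"
        by (rule iffD1[OF iff mp[OF spec[OF Fs(3), of j] conjI[OF jj]]])
    qed
    show "k_shellable k ?D'" unfolding k_shellable_def
      by (intro conjI assms(3) maxk exI[of _ "map (dupk k) Fs"] c1 c2 c3)
  next
    assume ksh: "k_shellable k ?D'"
    obtain Fs' where Fs': "distinct Fs'" "set Fs' = facets ?D'"
      "\<forall>j. 0 < j \<and> j < length Fs' \<longrightarrow>
        facets (shell_inter Fs' j) \<noteq> {} \<and>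
        (\<forall>\<sigma>\<in>facets (shell_inter Fs' j). card \<sigma> + k = card (Fs' ! j)) \<and>
        (card (facets (shell_inter Fs' j)) > 1 \<longrightarrow>
           (\<forall>\<sigma>\<in>facets (shell_inter Fs' j). \<forall>\<tau>\<in>facets (shell_inter Fs' j).
               \<sigma> \<noteq> \<tau> \<longrightarrow> Fs' ! j \<subseteq> \<sigma> \<union> \<tau>))"
      using ksh unfolding k_shellable_def by blast
    define Fs where "Fs = map (\<lambda>S. fst ` S) Fs'"
    have mapeq: "map (dupk k) Fs = Fs'"
      unfolding Fs_def map_map
    proof (rule map_idI)
      fix S assume "S \<in> set Fs'"
      then obtain A where SA: "S = dupk k A" using Fs'(2) fac by auto
      hence "fst ` S = A" by (simp only: fst_dupk[OF assms(3)])
      thus "(dupk k \<circ> (\<lambda>S. fst ` S)) S = S" using SA by simp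
    qed
    have "distinct (map (dupk k) Fs)" using mapeq Fs'(1) by simp
    hence d1: "distinct Fs" by (simp add: distinct_map)
    have d2: "set Fs = facets ?D"
    proof -
      have "dupk k ` set Fs = set (map (dupk k) Fs)" by simp
      also have "\<dots> = set Fs'" by (simp only: mapeq)
      also have "\<dots> = dupk k ` facets ?D" using Fs'(2) fac by simp
      finally have "dupk k ` set Fs = dupk k ` facets ?D" .
      thus ?thesis by (simp only: inj_image_eq_iff[OF injD[of UNIV]])
    qed
    have d3: "\<forall>j. 0 < j \<and> j < length Fs \<longrightarrow> (\<forall>\<sigma>\<in>facets (shell_inter Fs j). card \<sigma> + 1 = card (Fs ! j))"
    proof (intro allI impI)
      fix j assume j: "0 < j \<and> j < length Fs"
      have fj: "finite (Fs ! j)" using j d2 finF nth_mem by auto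
      have jj: "0 < j \<and> j < length Fs'" using j unfolding Fs_def by simp
      note iff = step_equiv[OF assms(3) conjunct1[OF j] conjunct2[OF j] fj, unfolded mapeq]
      show "\<forall>\<sigma>\<in>facets (shell_inter Fs j). card \<sigma> + 1 = card (Fs ! j)"
        by (rule iffD2[OF iff mp[OF spec[OF Fs'(3), of j] jj]])
    qed
    show "shellable ?D" unfolding shellable_def
      by (intro exI[of _ Fs] conjI d1 d2 d3)
  qed
qed

end
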